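(* Let $\kappa=(\xi,\eta)\in S\mathbb{H}$, regarded as a $2\times1$ column vector, and let $\check\kappa=(\eta',-\xi')$, also regarded as a column. Then there exists a $1\times2$ row vector $\tau=(\alpha,\beta)\in\mathbb{H}^2$ such that exactly one of $\tau\kappa=\alpha\xi+\beta\eta$ and $\tau\check\kappa=\alpha\eta'-\beta\xi'$ is zero.
   Context: For $q=a+bi+cj+dk\in\mathbb{H}$, $q'=a-bi-cj+dk$, $\bar q=a-bi-cj-dk$. $\mathcal{V}=\mathrm{span}_\mathbb{R}\{1,i,j\}$. $S\mathbb{H}=\{(\xi,\eta)\in\mathbb{H}^2\setminus\{(0,0)\}:\xi\bar\eta\in\mathcal{V}\}$. *)

theory Defs
  imports Main "HOL.Real"
begin

datatype quat = Quat (Re: real) (Im1: real) (Im2: real) (Im3: real)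

instantiation quat :: "{zero, plus, minus, uminus, times}"
begin
definition "0 = Quat 0 0 0 0"
definition "p + q = Quat (Re p + Re q) (Im1 p + Im1 q) (Im2 p + Im2 q) (Im3 p + Im3 q)"
definition "p - q = Quat (Re p - Re q) (Im1 p - Im1 q) (Im2 p - Im2 q) (Im3 p - Im3 q)"
definition "- q = Quat (- Re q) (- Im1 q) (- Im2 q) (- Im3 q)"
text \<open>Hamilton product: i^2 = j^2 = k^2 = ijk = -1.\<close>
definition "p * q = Quat
   (Re p * Re q - Im1 p * Im1 q - Im2 p * Im2 q - Im3 p * Im3 q)
   (Re p * Im1 q + Im1 p * Re q + Im2 p * Im3 q - Im3 p * Im2 q)
   (Re p * Im2 q - Im1 p * Im3 q + Im2 p * Re q + Im3 p * Im1 q)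
   (Re p * Im3 q + Im1 p * Im2 q - Im2 p * Im1 q + Im3 p * Re q)"
instance ..
end

definition qcnj :: "quat \<Rightarrow> quat" where
  "qcnj q = Quat (Re q) (- Im1 q) (- Im2 q) (- Im3 q)"

definition qprime :: "quat \<Rightarrow> quat" where
  "qprime q = Quat (Re q) (- Im1 q) (- Im2 q) (Im3 q)"

definition qV :: "quat set" where
  "qV = {q. Im3 q = 0}"

definition SH :: "(quat \<times> quat) set" where
  "SH = {(\<xi>, \<eta>). (\<xi>, \<eta>) \<noteq> (0, 0) \<and> \<xi> * qcnj \<eta> \<in> qV}"

end

theory Submission
  imports Defs
begin

lemma key:
  fixes a b c d e f g h :: real
  assumes t: "Im3 (Quat a b c d * qcnj (Quat e f g h)) = 0"
  shows "Quat e f g h * qcnj (Quat a b c d) * qprime (Quat e f g h) + Quat (a*a+b*b+c*c+d*d) 0 0 0 * qprime (Quat a b c d)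
     = Quat ((a*a+b*b+c*c+d*d+e*e+f*f+g*g+h*h)*a) (-(a*a+b*b+c*c+d*d+e*e+f*f+g*g+h*h)*b)
            (-(a*a+b*b+c*c+d*d+e*e+f*f+g*g+h*h)*c) ((a*a+b*b+c*c+d*d+e*e+f*f+g*g+h*h)*d)"
  using t
  apply (simp add: times_quat_def plus_quat_def qcnj_def qprime_def)
  apply (intro conjI; algebra)
  done

lemma first0:
  fixes a b c d e f g h :: real
  shows "Quat e f g h * qcnj (Quat a b c d) * Quat a b c d + (- Quat (a*a+b*b+c*c+d*d) 0 0 0) * Quat e f g h = 0"
  by (simp add: times_quat_def plus_quat_def qcnj_def uminus_quat_def zero_quat_def algebra_simps)

theorem lemma3p8:
  fixes \<xi> \<eta> :: quat
  assumes "(\<xi>, \<eta>) \<in> SH"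
  shows "\<exists>\<alpha> \<beta> :: quat.
           (\<alpha> * \<xi> + \<beta> * \<eta> = 0) \<noteq> (\<alpha> * qprime \<eta> - \<beta> * qprime \<xi> = 0)"
proof (cases "\<xi> = 0")
  case True
  with assms have "\<eta> \<noteq> 0" by (auto simp: SH_def)
  hence "qprime \<eta> \<noteq> 0"
    by (cases \<eta>) (auto simp: qprime_def zero_quat_def)
  moreover have "Quat 1 0 0 0 * \<xi> + 0 * \<eta> = 0"
    using True by (simp add: times_quat_def plus_quat_def zero_quat_def)
  moreover have "Quat 1 0 0 0 * qprime \<eta> - 0 * qprime \<xi> = qprime \<eta>"
    by (cases \<eta>) (simp add: times_quat_def minus_quat_def zero_quat_def qprime_def)
  ultimately show ?thesis by metis
next
  case False
  obtain a b c d where x: "\<xi> = Quat a b c d" by (cases \<xi>)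
  obtain e f g h where y: "\<eta> = Quat e f g h" by (cases \<eta>)
  have t: "Im3 (Quat a b c d * qcnj (Quat e f g h)) = 0"
    using assms x y by (simp add: SH_def qV_def)
  have ne: "a \<noteq> 0 \<or> b \<noteq> 0 \<or> c \<noteq> 0 \<or> d \<noteq> 0" using False x by (auto simp: zero_quat_def)
  define N where "N = a*a+b*b+c*c+d*d+e*e+f*f+g*g+h*h"
  have sq: "\<And>x::real. x \<noteq> 0 \<Longrightarrow> x*x > 0" by (auto simp: zero_less_mult_iff linorder_neq_iff)
  have sq0: "\<And>x::real. x*x \<ge> 0" by simp
  have Npos: "N > 0" unfolding N_def using ne sq[of a] sq[of b] sq[of c] sq[of d]
    sq0[of a] sq0[of b] sq0[of c] sq0[of d] sq0[of e] sq0[of f] sq0[of g] sq0[of h]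
    by linarith
  let ?al = "Quat e f g h * qcnj (Quat a b c d)"
  let ?be = "- Quat (a*a+b*b+c*c+d*d) 0 0 0"
  have "?al * \<xi> + ?be * \<eta> = 0" using x y first0 by simp
  moreover have "?al * qprime \<eta> - ?be * qprime \<xi> \<noteq> 0"
  proof
    assume h0: "?al * qprime \<eta> - ?be * qprime \<xi> = 0"
    have "?al * qprime \<eta> - ?be * qprime \<xi> = Quat e f g h * qcnj (Quat a b c d) * qprime (Quat e f g h) + Quat (a*a+b*b+c*c+d*d) 0 0 0 * qprime (Quat a b c d)"
      using x y by (simp add: times_quat_def plus_quat_def minus_quat_def uminus_quat_def qprime_def algebra_simps)
    also have "\<dots> = Quat (N*a) (-N*b) (-N*c) (N*d)" using key[OF t] by (simp add: N_def)
    finally have "N*a = 0 \<and> N*b = 0 \<and> N*c = 0 \<and> N*d = 0" using h0 by (simp add: zero_quat_def)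
    thus False using Npos ne by simp
  qed
  ultimately show ?thesis by metis
qed

end
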